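(* Let $S_j$ be local potentials satisfying (A)–(E), and let $(p_1,q_1),\dots,(p_d,q_d)\in\mathbb{Z}^d\times\mathbb{Z}$ with $p_1,\dots,p_d$ linearly independent. Then every minimizer $x$ of $W_{p,q}$ on $\mathbb{X}_{p,q}$ is a global minimizer.
   Context: Notation: $\|i\|=\sum_{k=1}^d|i_k|$, $B_j^r=\{k:\|k-j\|\le r\}$, $(\tau_{k,l}x)_i=x_{i+k}+l$. Local potentials $S_j:\mathbb{R}^{\mathbb{Z}^d}\to\mathbb{R}$, $j\in\mathbb{Z}^d$, satisfy: (A) there is $r\in(0,\infty)$ and $C^2$ functions $s_j:\mathbb{R}^{B_j^r}\to\mathbb{R}$ with $S_j(x)=s_j(x|_{B_j^r})$; (B) $S_j(\tau_{k,l}x)=S_{j+k}(x)$; (C) each $S_j$ is bounded below and $S_j(x)\to\infty$ as $|x_k-x_j|\to\infty$ whenever $\|k-j\|=1$; (D) $\partial_{i,k}S_j\le0$ for $i\ne k$, and $\partial_{i,k}S_i<0$ when $\|i-k\|=1$; (E) $|\partial_{i,k}S_j|\le C$ uniformly. With $p$ the matrix with columns $p_j$: $B_p=p([0,1)^d)\cap\mathbb{Z}^d$, $\mathbb{X}_{p,q}=\{x:\tau_{p_j,q_j}x=x\ \forall j\}$, $W_{p,q}(x)=\sum_{j\in B_p}S_j(x)$. For finite $B\subset\mathbb{Z}^d$: $W_B(x)=\sum_{j\in B}S_j(x)$ and $\mathring{B}^{(r)}=\{i\in B:B_i^r\subset B\}$. A configuration $x$ is a global minimizer if $W_B(x+y)\ge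 W_B(x)$ for every finite $B\subset\mathbb{Z}^d$ and every $y\in\mathbb{R}^{\mathbb{Z}^d}$ with support in $\mathring{B}^{(r)}$. *)

theory Defs
  imports "HOL-Analysis.Analysis"
begin

type_synonym 'd config = "int ^ 'd \<Rightarrow> real"

definition norm1 :: "int ^ 'd::finite \<Rightarrow> int" where
  "norm1 i = (\<Sum>k\<in>UNIV. \<bar>i $ k\<bar>)"

definition ballZ :: "int ^ 'd::finite \<Rightarrow> real \<Rightarrow> (int ^ 'd) set" where
  "ballZ j r = {k. real_of_int (norm1 (k - j)) \<le> r}"

definition tau :: "int ^ 'd::finite \<Rightarrow> int \<Rightarrow> 'd config \<Rightarrow> 'd config" where
  "tau k l x = (\<lambda>i. x (i + k) + real_of_int l)"

definition pderiv_at :: "int ^ 'd::finite \<Rightarrow> ('d config \<Rightarrow> real) \<Rightarrow> 'd config \<Rightarrow> real" where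
  "pderiv_at i f x = deriv (\<lambda>t. f (x(i := t))) (x i)"

definition C2_fun :: "('d::finite config \<Rightarrow> real) \<Rightarrow> bool" where
  "C2_fun f \<longleftrightarrow>
     (\<forall>x i. (\<lambda>t. f (x(i := t))) differentiable (at (x i))) \<and>
     (\<forall>x i k. (\<lambda>t. pderiv_at k f (x(i := t))) differentiable (at (x i))) \<and>
     (\<forall>i. continuous_on UNIV (pderiv_at i f)) \<and>
     (\<forall>i k. continuous_on UNIV (pderiv_at i (pderiv_at k f)))"

definition local_potentials ::
  "(int ^ 'd::finite \<Rightarrow> 'd config \<Rightarrow> real) \<Rightarrow> real \<Rightarrow> bool" where
  "local_potentials S r \<longleftrightarrow>
     \<comment> \<open>(A)\<close>
     0 < r \<and>
     (\<forall>j x y. (\<forall>k\<in>ballZ j r. x k = y k) \<longrightarrow> S j x = S j y) \<and>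
     (\<forall>j. C2_fun (S j)) \<and>
     \<comment> \<open>(B)\<close>
     (\<forall>j k l x. S j (tau k l x) = S (j + k) x) \<and>
     \<comment> \<open>(C)\<close>
     (\<forall>j. \<exists>m. \<forall>x. m \<le> S j x) \<and>
     (\<forall>j k. norm1 (k - j) = 1 \<longrightarrow>
        (\<forall>M. \<exists>R. \<forall>x. R < \<bar>x k - x j\<bar> \<longrightarrow> M < S j x)) \<and>
     \<comment> \<open>(D)\<close>
     (\<forall>i k j x. i \<noteq> k \<longrightarrow> pderiv_at i (pderiv_at k (S j)) x \<le> 0) \<and>
     (\<forall>i k x. norm1 (i - k) = 1 \<longrightarrow> pderiv_at i (pderiv_at k (S i)) x < 0) \<and>
     \<comment> \<open>(E)\<close>
     (\<exists>C. \<forall>i k j x. \<bar>pderiv_at i (pderiv_at k (S j)) x\<bar> \<le> C)"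

definition real_vec :: "int ^ 'd::finite \<Rightarrow> real ^ 'd" where
  "real_vec v = (\<chi> k. real_of_int (v $ k))"

definition lin_indep_family :: "('d::finite \<Rightarrow> int ^ 'd) \<Rightarrow> bool" where
  "lin_indep_family p \<longleftrightarrow>
     (\<forall>c :: 'd \<Rightarrow> real. (\<Sum>j\<in>UNIV. c j *\<^sub>R real_vec (p j)) = 0 \<longrightarrow> (\<forall>j. c j = 0))"

definition Bp :: "('d::finite \<Rightarrow> int ^ 'd) \<Rightarrow> (int ^ 'd) set" where
  "Bp p = {i. \<exists>t :: 'd \<Rightarrow> real. (\<forall>j. 0 \<le> t j \<and> t j < 1) \<and>
              real_vec i = (\<Sum>j\<in>UNIV. t j *\<^sub>R real_vec (p j))}"

definition Xpq :: "('d::finite \<Rightarrow> int ^ 'd) \<Rightarrow> ('d \<Rightarrow> int) \<Rightarrow> 'd config set" where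
  "Xpq p q = {x. \<forall>j. tau (p j) (q j) x = x}"

definition WB :: "(int ^ 'd::finite \<Rightarrow> 'd config \<Rightarrow> real) \<Rightarrow> (int ^ 'd) set \<Rightarrow> 'd config \<Rightarrow> real" where
  "WB S B x = (\<Sum>j\<in>B. S j x)"

definition Wpq :: "(int ^ 'd \<Rightarrow> 'd config \<Rightarrow> real) \<Rightarrow> ('d::finite \<Rightarrow> int ^ 'd) \<Rightarrow> 'd config \<Rightarrow> real" where
  "Wpq S p x = WB S (Bp p) x"

definition interiorB :: "(int ^ 'd::finite) set \<Rightarrow> real \<Rightarrow> (int ^ 'd) set" where
  "interiorB B r = {i \<in> B. ballZ i r \<subseteq> B}"

definition global_minimizer ::
  "(int ^ 'd::finite \<Rightarrow> 'd config \<Rightarrow> real) \<Rightarrow> real \<Rightarrow> 'd config \<Rightarrow> bool" where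
  "global_minimizer S r x \<longleftrightarrow>
     (\<forall>B y. finite B \<longrightarrow> (\<forall>i. y i \<noteq> 0 \<longrightarrow> i \<in> interiorB B r) \<longrightarrow>
        WB S B x \<le> WB S B (\<lambda>i. x i + y i))"

end

theory Submission
  imports Defs
begin


lemma pderiv_has:
  assumes C: "C2_fun f"
  shows "((\<lambda>t. f (y(i := t))) has_real_derivative pderiv_at i f (y(i := s))) (at s)"
proof -
  have "(\<lambda>t. f ((y(i:=s))(i := t))) differentiable (at ((y(i:=s)) i))"
    using C unfolding C2_fun_def by blast
  hence d: "(\<lambda>t. f (y(i := t))) differentiable (at s)" by simp
  have "pderiv_at i f (y(i := s)) = deriv (\<lambda>t. f (y(i := t))) s"
    unfolding pderiv_at_def by simp
  thus ?thesis using d DERIV_deriv_iff_real_differentiable by metis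
qed

lemma pderiv2_has:
  assumes C: "C2_fun f"
  shows "((\<lambda>t. pderiv_at k f (y(i := t))) has_real_derivative pderiv_at i (pderiv_at k f) (y(i := s))) (at s)"
proof -
  have "(\<lambda>t. pderiv_at k f ((y(i:=s))(i := t))) differentiable (at ((y(i:=s)) i))"
    using C unfolding C2_fun_def by blast
  hence d: "(\<lambda>t. pderiv_at k f (y(i := t))) differentiable (at s)" by simp
  have "pderiv_at i (pderiv_at k f) (y(i := s)) = deriv (\<lambda>t. pderiv_at k f (y(i := t))) s"
    unfolding pderiv_at_def by simp
  thus ?thesis using d DERIV_deriv_iff_real_differentiable by metis
qed

lemma sub2:
  assumes C: "C2_fun f"
    and D: "\<And>x. pderiv_at k (pderiv_at i f) x \<le> 0"
    and ik: "i \<noteq> k" and aa: "a \<le> a'" and bb: "b \<le> b'"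
  shows "f (x(i:=a', k:=b')) - f (x(i:=a', k:=b)) \<le> f (x(i:=a, k:=b')) - f (x(i:=a, k:=b))"
proof -
  define \<phi> where "\<phi> u = f (x(i:=u, k:=b')) - f (x(i:=u, k:=b))" for u
  have "\<phi> a' \<le> \<phi> a"
  proof (rule DERIV_nonpos_imp_nonincreasing[OF aa])
    fix u
    have h1: "((\<lambda>t. f ((x(k:=b'))(i := t))) has_real_derivative pderiv_at i f ((x(k:=b'))(i := u))) (at u)"
      by (rule pderiv_has[OF C])
    have h2: "((\<lambda>t. f ((x(k:=b))(i := t))) has_real_derivative pderiv_at i f ((x(k:=b))(i := u))) (at u)"
      by (rule pderiv_has[OF C])
    have e: "\<And>t c. (x(k:=c))(i:=t) = x(i:=t, k:=c)" using ik by (simp add: fun_upd_twist)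
    have "(\<phi> has_real_derivative (pderiv_at i f (x(i:=u, k:=b')) - pderiv_at i f (x(i:=u, k:=b)))) (at u)"
      unfolding \<phi>_def using DERIV_diff[OF h1 h2] by (simp add: e)
    moreover have "pderiv_at i f (x(i:=u, k:=b')) \<le> pderiv_at i f (x(i:=u, k:=b))"
    proof -
      have "(\<lambda>t. pderiv_at i f (x(i:=u, k:=t))) b' \<le> (\<lambda>t. pderiv_at i f (x(i:=u, k:=t))) b"
      proof (rule DERIV_nonpos_imp_nonincreasing[OF bb])
        fix w
        have "((\<lambda>t. pderiv_at i f ((x(i:=u))(k := t))) has_real_derivative pderiv_at k (pderiv_at i f) ((x(i:=u))(k := w))) (at w)"
          by (rule pderiv2_has[OF C])
        thus "\<exists>y. ((\<lambda>t. pderiv_at i f (x(i:=u, k:=t))) has_real_derivative y) (at w) \<and> y \<le> 0"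
          using D by auto
      qed
      thus ?thesis by simp
    qed
    ultimately show "\<exists>y. (\<phi> has_real_derivative y) (at u) \<and> y \<le> 0" by force
  qed
  thus ?thesis unfolding \<phi>_def by simp
qed



definition pmin :: "('a \<Rightarrow> real) \<Rightarrow> ('a \<Rightarrow> real) \<Rightarrow> 'a \<Rightarrow> real" where
  "pmin a b = (\<lambda>i. min (a i) (b i))"
definition pmax :: "('a \<Rightarrow> real) \<Rightarrow> ('a \<Rightarrow> real) \<Rightarrow> 'a \<Rightarrow> real" where
  "pmax a b = (\<lambda>i. max (a i) (b i))"

definition sub2prop :: "(('a \<Rightarrow> real) \<Rightarrow> real) \<Rightarrow> bool" where
  "sub2prop f \<longleftrightarrow> (\<forall>x i k a a' b b'. i \<noteq> k \<longrightarrow> a \<le> a' \<longrightarrow> b \<le> b' \<longrightarrow>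
     f (x(i:=a', k:=b')) - f (x(i:=a', k:=b)) \<le> f (x(i:=a, k:=b')) - f (x(i:=a, k:=b)))"

lemma incdiff:
  assumes P: "sub2prop f" and fin: "finite E"
  shows "\<forall>c a. (\<forall>i. c i \<le> a i) \<longrightarrow> (\<forall>i. i \<notin> E \<longrightarrow> c i = a i) \<longrightarrow> e \<notin> E \<longrightarrow> a e \<le> w \<longrightarrow>
     f (a(e:=w)) - f a \<le> f (c(e:=w)) - f c"
  using fin
proof (induction E rule: finite_induct)
  case empty
  then show ?case by (auto simp: fun_eq_iff)
next
  case (insert g E)
  show ?case
  proof (intro allI impI)
    fix c a
    assume ca: "\<forall>i. c i \<le> a i" and ag: "\<forall>i. i \<notin> insert g E \<longrightarrow> c i = a i"
      and eE: "e \<notin> insert g E" and w: "a e \<le> w"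
    define m where "m = c(g := a g)"
    have "\<forall>i. m i \<le> a i" using ca by (simp add: m_def)
    moreover have "\<forall>i. i \<notin> E \<longrightarrow> m i = a i" using ag by (simp add: m_def)
    ultimately have IH: "f (a(e:=w)) - f a \<le> f (m(e:=w)) - f m"
      using insert.IH eE w by blast
    have ge: "g \<noteq> e" using eE by auto
    have cea: "c e = a e" using ag eE by auto
    have "f (c(g:=a g, e:=w)) - f (c(g:=a g, e:=c e)) \<le> f (c(g:=c g, e:=w)) - f (c(g:=c g, e:=c e))"
      using P ge ca w cea unfolding sub2prop_def by metis
    moreover have "c(g:=a g, e:=c e) = m" "c(g:=c g, e:=c e) = c" "c(g:=c g, e:=w) = c(e:=w)"
      using ge by (auto simp: m_def fun_eq_iff)
    ultimately have "f (m(e:=w)) - f m \<le> f (c(e:=w)) - f c"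
      by (simp add: m_def)
    with IH show "f (a(e:=w)) - f a \<le> f (c(e:=w)) - f c" by linarith
  qed
qed

lemma submod_fin:
  assumes P: "sub2prop f" and fin: "finite E"
  shows "\<forall>a b. (\<forall>i. i \<notin> E \<longrightarrow> a i = b i) \<longrightarrow> f (pmin a b) + f (pmax a b) \<le> f a + f b"
  using fin
proof (induction E rule: finite_induct)
  case empty
  then show ?case by (auto simp: pmin_def pmax_def)
next
  case (insert e E)
  have H: "f (pmin a b) + f (pmax a b) \<le> f a + f b"
    if ab: "\<forall>i. i \<notin> insert e E \<longrightarrow> a i = b i" and le: "a e \<le> b e" for a b
  proof -
    define a' where "a' = a(e := b e)"
    have "\<forall>i. i \<notin> E \<longrightarrow> a' i = b i" using ab by (simp add: a'_def)
    hence IH: "f (pmin a' b) + f (pmax a' b) \<le> f a' + f b" using insert.IH by blast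
    have e1: "pmin a' b = (pmin a b)(e := b e)" by (auto simp: pmin_def a'_def fun_eq_iff)
    have e2: "pmax a' b = pmax a b" using le by (auto simp: pmax_def a'_def fun_eq_iff max_def)
    have c1: "\<forall>i. pmin a b i \<le> a i" by (simp add: pmin_def)
    have c2: "\<forall>i. i \<notin> E \<longrightarrow> pmin a b i = a i" using ab le by (auto simp: pmin_def min_def)
    have "f (a(e:=b e)) - f a \<le> f ((pmin a b)(e:=b e)) - f (pmin a b)"
      using incdiff[OF P insert.hyps(1), of e "b e"] c1 c2 insert.hyps(2) le by blast
    with IH e1 e2 show ?thesis by (simp add: a'_def)
  qed
  show ?case
  proof (intro allI impI)
    fix a b :: "_ \<Rightarrow> real" assume ab: "\<forall>i. i \<notin> insert e E \<longrightarrow> a i = b i"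
    show "f (pmin a b) + f (pmax a b) \<le> f a + f b"
    proof (cases "a e \<le> b e")
      case True then show ?thesis using H ab by blast
    next
      case False
      have "f (pmin b a) + f (pmax b a) \<le> f b + f a" using H[of b a] ab False by force
      moreover have "pmin b a = pmin a b" "pmax b a = pmax a b"
        by (auto simp: pmin_def pmax_def fun_eq_iff min.commute max.commute)
      ultimately show ?thesis by simp
    qed
  qed
qed

lemma finite_box: "finite {v :: int ^ 'd::finite. \<forall>k. \<bar>v $ k\<bar> \<le> C}"
proof -
  have "{v :: int ^ 'd. \<forall>k. \<bar>v $ k\<bar> \<le> C} \<subseteq> vec_lambda ` (PiE UNIV (\<lambda>_. {-C..C}))"
  proof
    fix v :: "int ^ 'd" assume "v \<in> {v. \<forall>k. \<bar>v $ k\<bar> \<le> C}"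
    hence "(\<lambda>k. v $ k) \<in> PiE UNIV (\<lambda>_. {-C..C})" by (auto simp: abs_le_iff) (smt (verit))
    thus "v \<in> vec_lambda ` (PiE UNIV (\<lambda>_. {-C..C}))" by (metis image_eqI vec_lambda_eta)
  qed
  moreover have "finite (PiE (UNIV::'d set) (\<lambda>_. {-C..C}))" by (rule finite_PiE) auto
  ultimately show ?thesis using finite_subset by blast
qed

lemma norm1_comp: "\<bar>v $ m\<bar> \<le> norm1 v"
  unfolding norm1_def by (rule member_le_sum) auto

lemma finite_ballZ: "finite (ballZ j r)"
proof -
  have "ballZ j r \<subseteq> {v. \<forall>k. \<bar>v $ k\<bar> \<le> \<lceil>r\<rceil> + norm1 j}"
  proof
    fix v assume "v \<in> ballZ j r"
    hence h: "real_of_int (norm1 (v - j)) \<le> r" by (simp add: ballZ_def)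
    show "v \<in> {v. \<forall>k. \<bar>v $ k\<bar> \<le> \<lceil>r\<rceil> + norm1 j}"
    proof safe
      fix k
      have "\<bar>(v - j) $ k\<bar> \<le> norm1 (v - j)" by (rule norm1_comp)
      moreover have "norm1 (v - j) \<le> \<lceil>r\<rceil>" using h by linarith
      moreover have "\<bar>j $ k\<bar> \<le> norm1 j" by (rule norm1_comp)
      ultimately show "\<bar>v $ k\<bar> \<le> \<lceil>r\<rceil> + norm1 j" by auto
    qed
  qed
  thus ?thesis using finite_box finite_subset by blast
qed

lemma S_sub2:
  assumes LP: "local_potentials S r"
  shows "sub2prop (S j)"
  unfolding sub2prop_def
proof (intro allI impI)
  fix x i k a a' b b'
  assume "(i::int^'a) \<noteq> k" "(a::real) \<le> a'" "(b::real) \<le> b'"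
  moreover have "C2_fun (S j)" using LP by (simp add: local_potentials_def)
  moreover have "\<And>x. pderiv_at k (pderiv_at i (S j)) x \<le> 0" using LP \<open>i \<noteq> k\<close>
    unfolding local_potentials_def by metis
  ultimately show "S j (x(i:=a', k:=b')) - S j (x(i:=a', k:=b)) \<le> S j (x(i:=a, k:=b')) - S j (x(i:=a, k:=b))"
    using sub2 by blast
qed

lemma S_submod:
  assumes LP: "local_potentials S r"
  shows "S j (pmin a b) + S j (pmax a b) \<le> S j a + S j b"
proof -
  have loc: "\<And>x y. (\<forall>k\<in>ballZ j r. x k = y k) \<Longrightarrow> S j x = S j y"
    using LP unfolding local_potentials_def by metis
  define a' where "a' = (\<lambda>i. if i \<in> ballZ j r then a i else b i)"
  have "\<forall>i. i \<notin> ballZ j r \<longrightarrow> a' i = b i" by (simp add: a'_def)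
  hence "S j (pmin a' b) + S j (pmax a' b) \<le> S j a' + S j b"
    using submod_fin[OF S_sub2[OF LP] finite_ballZ] by blast
  moreover have "S j a' = S j a" by (rule loc) (simp add: a'_def)
  moreover have "S j (pmin a' b) = S j (pmin a b)" by (rule loc) (simp add: a'_def pmin_def)
  moreover have "S j (pmax a' b) = S j (pmax a b)" by (rule loc) (simp add: a'_def pmax_def)
  ultimately show ?thesis by simp
qed

lemma WB_submod:
  assumes LP: "local_potentials S r"
  shows "WB S B (pmin a b) + WB S B (pmax a b) \<le> WB S B a + WB S B b"
  unfolding WB_def sum.distrib[symmetric] by (rule sum_mono) (rule S_submod[OF LP])



lemma real_vec_add: "real_vec (a + b) = real_vec a + real_vec b"
  by (simp add: real_vec_def vec_eq_iff)
lemma real_vec_diff: "real_vec (a - b) = real_vec a - real_vec b"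
  by (simp add: real_vec_def vec_eq_iff)
lemma real_vec_uminus: "real_vec (- a) = - real_vec a"
  by (simp add: real_vec_def vec_eq_iff)
lemma real_vec_zero: "real_vec 0 = 0"
  by (simp add: real_vec_def vec_eq_iff)
lemma real_vec_smult: "real_vec (c *s v) = real_of_int c *\<^sub>R real_vec v"
  by (simp add: real_vec_def vec_eq_iff)
lemma real_vec_sum: "real_vec (sum f A) = (\<Sum>x\<in>A. real_vec (f x))"
  by (induction A rule: infinite_finite_induct) (auto simp: real_vec_zero real_vec_add)
lemma real_vec_inj: "real_vec a = real_vec b \<Longrightarrow> a = b"
  by (simp add: real_vec_def vec_eq_iff)

lemma li_unique:
  assumes li: "lin_indep_family p"
    and eq: "(\<Sum>j\<in>UNIV. c j *\<^sub>R real_vec (p j)) = (\<Sum>j\<in>UNIV. c' j *\<^sub>R real_vec (p j))"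
  shows "c j = c' j"
proof -
  have "(\<Sum>j\<in>UNIV. (c j - c' j) *\<^sub>R real_vec (p j)) = 0"
    using eq by (simp add: scaleR_diff_left sum_subtractf)
  thus ?thesis using li unfolding lin_indep_family_def by force
qed

lemma li_span:
  assumes li: "lin_indep_family (p :: 'd::finite \<Rightarrow> int ^ 'd)"
  shows "\<exists>t. v = (\<Sum>j\<in>UNIV. t j *\<^sub>R real_vec (p j))"
proof -
  define f :: "real ^ 'd \<Rightarrow> real ^ 'd" where "f t = (\<Sum>j\<in>UNIV. (t $ j) *\<^sub>R real_vec (p j))" for t
  have lf: "linear f"
    by (rule linearI) (simp_all add: f_def scaleR_add_left sum.distrib scaleR_sum_right)
  have "inj f"
  proof (rule injI)
    fix a b assume "f a = f b"
    hence "\<And>j. a $ j = b $ j" using li_unique[OF li] unfolding f_def by blast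
    thus "a = b" by (simp add: vec_eq_iff)
  qed
  hence "surj f" using lf linear_injective_imp_surjective by blast
  then obtain t where "v = f t" by (metis surjD)
  thus ?thesis unfolding f_def by blast
qed

lemma finite_Bp: "finite (Bp (P :: 'd::finite \<Rightarrow> int ^ 'd))"
proof -
  define C where "C = (\<Sum>j\<in>UNIV. \<Sum>k\<in>UNIV. \<bar>P j $ k\<bar>)"
  have "Bp P \<subseteq> {v. \<forall>k. \<bar>v $ k\<bar> \<le> C}"
  proof
    fix v assume "v \<in> Bp P"
    then obtain t where t: "\<forall>j. 0 \<le> t j \<and> t j < 1" and v: "real_vec v = (\<Sum>j\<in>UNIV. t j *\<^sub>R real_vec (P j))"
      unfolding Bp_def by blast
    show "v \<in> {v. \<forall>k. \<bar>v $ k\<bar> \<le> C}"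
    proof safe
      fix k
      have "real_of_int (v $ k) = (\<Sum>j\<in>UNIV. t j * real_of_int (P j $ k))"
        using arg_cong[OF v, of "\<lambda>u. u $ k"] by (simp add: real_vec_def)
      hence "\<bar>real_of_int (v $ k)\<bar> \<le> (\<Sum>j\<in>UNIV. \<bar>t j * real_of_int (P j $ k)\<bar>)"
        by (simp add: sum_abs)
      also have "\<dots> \<le> (\<Sum>j\<in>UNIV. real_of_int \<bar>P j $ k\<bar>)"
      proof (rule sum_mono)
        fix j
        have "\<bar>t j\<bar> \<le> 1" using t by (simp add: less_imp_le)
        thus "\<bar>t j * real_of_int (P j $ k)\<bar> \<le> real_of_int \<bar>P j $ k\<bar>"
          by (simp add: abs_mult mult_left_le_one_le)
      qed
      also have "\<dots> \<le> (\<Sum>j\<in>UNIV. real_of_int (\<Sum>k\<in>UNIV. \<bar>P j $ k\<bar>))"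
      proof (rule sum_mono)
        fix j
        have "\<bar>P j $ k\<bar> \<le> (\<Sum>k\<in>UNIV. \<bar>P j $ k\<bar>)" by (rule member_le_sum) auto
        thus "real_of_int \<bar>P j $ k\<bar> \<le> real_of_int (\<Sum>k\<in>UNIV. \<bar>P j $ k\<bar>)" by (metis of_int_le_iff)
      qed
      finally have "real_of_int \<bar>v $ k\<bar> \<le> real_of_int C" unfolding C_def of_int_sum by simp
      thus "\<bar>v $ k\<bar> \<le> C" by (simp only: of_int_le_iff)
    qed
  qed
  thus ?thesis using finite_box finite_subset by blast
qed

definition Lat :: "('d::finite \<Rightarrow> int ^ 'd) \<Rightarrow> (int ^ 'd) set" where
  "Lat P = {v. \<exists>n :: 'd \<Rightarrow> int. real_vec v = (\<Sum>j\<in>UNIV. real_of_int (n j) *\<^sub>R real_vec (P j))}"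

lemma Lat_add: "a \<in> Lat P \<Longrightarrow> b \<in> Lat P \<Longrightarrow> a + b \<in> Lat P"
  unfolding Lat_def
proof safe
  fix n m assume "real_vec a = (\<Sum>j\<in>UNIV. real_of_int (n j) *\<^sub>R real_vec (P j))"
    "real_vec b = (\<Sum>j\<in>UNIV. real_of_int (m j) *\<^sub>R real_vec (P j))"
  hence "real_vec (a + b) = (\<Sum>j\<in>UNIV. real_of_int (n j + m j) *\<^sub>R real_vec (P j))"
    by (simp add: real_vec_add scaleR_add_left sum.distrib)
  thus "\<exists>n. real_vec (a + b) = (\<Sum>j\<in>UNIV. real_of_int (n j) *\<^sub>R real_vec (P j))" by (rule exI[where x="\<lambda>j. n j + m j"])
qed

lemma Lat_uminus: "a \<in> Lat P \<Longrightarrow> - a \<in> Lat P"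
  unfolding Lat_def
proof safe
  fix n assume "real_vec a = (\<Sum>j\<in>UNIV. real_of_int (n j) *\<^sub>R real_vec (P j))"
  hence "real_vec (- a) = (\<Sum>j\<in>UNIV. real_of_int (- n j) *\<^sub>R real_vec (P j))"
    by (simp add: real_vec_uminus sum_negf)
  thus "\<exists>n. real_vec (- a) = (\<Sum>j\<in>UNIV. real_of_int (n j) *\<^sub>R real_vec (P j))" by (rule exI[where x="\<lambda>j. - n j"])
qed

lemma Lat_diff: "a \<in> Lat P \<Longrightarrow> b \<in> Lat P \<Longrightarrow> a - b \<in> Lat P"
  using Lat_add[of a P "- b"] Lat_uminus[of b P] by (metis diff_conv_add_uminus)

lemma Lat_zero: "0 \<in> Lat P"
proof -
  have "real_vec 0 = (\<Sum>j\<in>UNIV. real_of_int ((\<lambda>_. 0::int) j) *\<^sub>R real_vec (P j))"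
    by (simp add: real_vec_zero)
  thus ?thesis unfolding Lat_def mem_Collect_eq by (rule exI[where x="\<lambda>_. 0::int"])
qed

lemma Lat_gen: "P m \<in> Lat P"
proof -
  have "(\<Sum>j\<in>UNIV. real_of_int (if j = m then 1 else 0) *\<^sub>R real_vec (P j)) = (\<Sum>j\<in>UNIV. if j = m then real_vec (P j) else 0)"
    by (rule sum.cong) auto
  also have "\<dots> = real_vec (P m)" by simp
  finally have "real_vec (P m) = (\<Sum>j\<in>UNIV. real_of_int ((\<lambda>j. if j = m then 1 else 0::int) j) *\<^sub>R real_vec (P j))"
    by simp
  thus ?thesis unfolding Lat_def mem_Collect_eq by (rule exI[where x="\<lambda>j. if j = m then 1 else 0::int"])
qed

lemma Bp_unique:
  assumes li: "lin_indep_family P" and a: "a \<in> Bp P" and b: "b \<in> Bp P" and d: "a - b \<in> Lat P"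
  shows "a = b"
proof -
  obtain t where t: "\<forall>j. 0 \<le> t j \<and> t j < 1" and ta: "real_vec a = (\<Sum>j\<in>UNIV. t j *\<^sub>R real_vec (P j))"
    using a unfolding Bp_def by blast
  obtain s where s: "\<forall>j. 0 \<le> s j \<and> s j < 1" and sb: "real_vec b = (\<Sum>j\<in>UNIV. s j *\<^sub>R real_vec (P j))"
    using b unfolding Bp_def by blast
  obtain n where n: "real_vec (a - b) = (\<Sum>j\<in>UNIV. real_of_int (n j) *\<^sub>R real_vec (P j))"
    using d unfolding Lat_def by blast
  have eqs: "(\<Sum>j\<in>UNIV. (t j - s j) *\<^sub>R real_vec (P j)) = (\<Sum>j\<in>UNIV. real_of_int (n j) *\<^sub>R real_vec (P j))"
    using n ta sb by (simp add: real_vec_diff scaleR_diff_left sum_subtractf)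
  have e: "t j - s j = real_of_int (n j)" for j using li_unique[OF li eqs] .
  have "\<And>j. n j = 0"
  proof -
    fix j
    have "real_of_int (n j) < 1" "real_of_int (n j) > -1" using e[of j] t s by (smt (verit))+
    thus "n j = 0" by linarith
  qed
  hence "real_vec (a - b) = 0" using n by simp
  hence "real_vec a = real_vec b" by (simp add: real_vec_diff)
  thus ?thesis by (rule real_vec_inj)
qed

lemma rep_exists:
  assumes li: "lin_indep_family P"
  shows "\<exists>w. w \<in> Bp P \<and> v - w \<in> Lat P"
proof -
  obtain t where t: "real_vec v = (\<Sum>j\<in>UNIV. t j *\<^sub>R real_vec (P j))" using li_span[OF li] by blast
  define n where "n j = \<lfloor>t j\<rfloor>" for j
  define L where "L = (\<Sum>j\<in>UNIV. n j *s P j)"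
  have rL: "real_vec L = (\<Sum>j\<in>UNIV. real_of_int (n j) *\<^sub>R real_vec (P j))"
    by (simp add: L_def real_vec_sum real_vec_smult)
  have "real_vec (v - L) = (\<Sum>j\<in>UNIV. (t j - real_of_int (n j)) *\<^sub>R real_vec (P j))"
    using t rL by (simp add: real_vec_diff scaleR_diff_left sum_subtractf)
  moreover have "\<forall>j. 0 \<le> t j - real_of_int (n j) \<and> t j - real_of_int (n j) < 1"
  proof
    fix j
    have "real_of_int \<lfloor>t j\<rfloor> \<le> t j \<and> t j < real_of_int (\<lfloor>t j\<rfloor> + 1)" by (rule floor_correct)
    thus "0 \<le> t j - real_of_int (n j) \<and> t j - real_of_int (n j) < 1" unfolding n_def of_int_add of_int_1 by linarith
  qed
  ultimately have "v - L \<in> Bp P" unfolding Bp_def mem_Collect_eq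
    by (intro exI[where x="\<lambda>j. t j - real_of_int (n j)"]) simp
  moreover have "real_vec (v - (v - L)) = (\<Sum>j\<in>UNIV. real_of_int (n j) *\<^sub>R real_vec (P j))"
    using rL by simp
  hence "v - (v - L) \<in> Lat P" unfolding Lat_def mem_Collect_eq by (rule exI[where x=n])
  ultimately show ?thesis by blast
qed



lemma tau_tau: "tau k l (tau k' l' z) = tau (k + k') (l + l') z"
  by (simp add: tau_def fun_eq_iff add.assoc add.commute add.left_commute)

lemma tau_pmin: "tau k l (pmin a b) = pmin (tau k l a) (tau k l b)"
  by (auto simp: tau_def pmin_def fun_eq_iff min_def)
lemma tau_pmax: "tau k l (pmax a b) = pmax (tau k l a) (tau k l b)"
  by (auto simp: tau_def pmax_def fun_eq_iff max_def)

lemma S_tau: assumes "local_potentials S r" shows "S j (tau k l x) = S (j + k) x"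
  using assms unfolding local_potentials_def by simp

lemma S_per: "local_potentials S r \<Longrightarrow> tau k l z = z \<Longrightarrow> S (j + k) z = S j z"
  using S_tau by metis

lemma sum_upd_add:
  "(\<Sum>j\<in>UNIV. (if j = m then c j + d else c j) *\<^sub>R (u j :: 'b::real_vector)) = (\<Sum>j\<in>UNIV. c j *\<^sub>R u j) + d *\<^sub>R u m"
  for m :: "'a::finite"
proof -
  have "(\<Sum>j\<in>UNIV. (if j = m then c j + d else c j) *\<^sub>R u j) = (\<Sum>j\<in>UNIV. c j *\<^sub>R u j + (if j = m then d *\<^sub>R u j else 0))"
    by (rule sum.cong) (auto simp: scaleR_add_left)
  also have "\<dots> = (\<Sum>j\<in>UNIV. c j *\<^sub>R u j) + d *\<^sub>R u m" by (simp add: sum.distrib)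
  finally show ?thesis .
qed

lemma li_nonzero: "lin_indep_family p \<Longrightarrow> p m \<noteq> 0"
proof
  assume li: "lin_indep_family p" and z: "p m = 0"
  have "(\<Sum>j\<in>UNIV. (if j = m then 1 else 0) *\<^sub>R real_vec (p j)) = (\<Sum>j\<in>UNIV. if j = m then real_vec (p j) else 0)"
    by (rule sum.cong) auto
  also have "\<dots> = 0" using z by (simp add: real_vec_zero)
  finally show False using li[unfolded lin_indep_family_def, rule_format, of "\<lambda>j. if j = m then 1 else 0" m] by simp
qed

context
  fixes p :: "'d::finite \<Rightarrow> int ^ 'd" and q :: "'d \<Rightarrow> int" and m :: 'd
begin

definition "pp = p(m := p m + p m)"
definition "qq = q(m := q m + q m)"

lemma sum_pp: "(\<Sum>j\<in>UNIV. t j *\<^sub>R real_vec (pp j)) = (\<Sum>j\<in>UNIV. (if j = m then 2 * t j else t j) *\<^sub>R real_vec (p j))"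
proof (rule sum.cong)
  fix j
  have "t m *\<^sub>R real_vec (p m + p m) = (2 * t m) *\<^sub>R real_vec (p m)"
    unfolding real_vec_add by (metis mult_2 scaleR_add_left scaleR_add_right)
  thus "t j *\<^sub>R real_vec (pp j) = (if j = m then 2 * t j else t j) *\<^sub>R real_vec (p j)"
    by (cases "j = m") (simp_all add: pp_def)
qed simp

lemma li_pp: "lin_indep_family p \<Longrightarrow> lin_indep_family pp"
  unfolding lin_indep_family_def
proof (intro allI impI)
  fix c j
  assume li: "\<forall>c. (\<Sum>j\<in>UNIV. c j *\<^sub>R real_vec (p j)) = 0 \<longrightarrow> (\<forall>j. c j = 0)"
    and h: "(\<Sum>j\<in>UNIV. c j *\<^sub>R real_vec (pp j)) = 0"
  have "(\<Sum>j\<in>UNIV. (if j = m then 2 * c j else c j) *\<^sub>R real_vec (p j)) = 0" using h sum_pp by simp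
  hence "(\<lambda>j. if j = m then 2 * c j else c j) j = 0" using li[rule_format, of "\<lambda>j. if j = m then 2 * c j else c j"] by blast
  thus "c j = 0" by (auto split: if_splits)
qed

lemma Bp_pp_sub: "Bp pp \<subseteq> Bp p \<union> (\<lambda>w. p m + w) ` Bp p"
proof
  fix i assume "i \<in> Bp pp"
  then obtain t where t: "\<forall>j. 0 \<le> t j \<and> t j < 1" and ti: "real_vec i = (\<Sum>j\<in>UNIV. t j *\<^sub>R real_vec (pp j))"
    unfolding Bp_def by blast
  define t' where "t' j = (if j = m then 2 * t j else t j)" for j
  have ri: "real_vec i = (\<Sum>j\<in>UNIV. t' j *\<^sub>R real_vec (p j))" using ti sum_pp t'_def by simp
  show "i \<in> Bp p \<union> (\<lambda>w. p m + w) ` Bp p"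
  proof (cases "t m < 1/2")
    case True
    hence "\<forall>j. 0 \<le> t' j \<and> t' j < 1" using t by (auto simp: t'_def)
    thus ?thesis using ri unfolding Bp_def by blast
  next
    case False
    define t'' where "t'' j = (if j = m then t' j + (-1) else t' j)" for j
    have "real_vec (i - p m) = (\<Sum>j\<in>UNIV. t'' j *\<^sub>R real_vec (p j))"
      unfolding t''_def sum_upd_add using ri by (simp add: real_vec_diff)
    moreover have "\<forall>j. 0 \<le> t'' j \<and> t'' j < 1" using t False by (auto simp: t'_def t''_def)
    ultimately have "i - p m \<in> Bp p" unfolding Bp_def by blast
    moreover have "i = p m + (i - p m)" by simp
    ultimately show ?thesis by blast
  qed
qed

lemma Bp_pp_sup: "Bp p \<union> (\<lambda>w. p m + w) ` Bp p \<subseteq> Bp pp"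
proof safe
  fix i assume "i \<in> Bp p"
  then obtain s where s: "\<forall>j. 0 \<le> s j \<and> s j < 1" and si: "real_vec i = (\<Sum>j\<in>UNIV. s j *\<^sub>R real_vec (p j))"
    unfolding Bp_def by blast
  have s0: "0 \<le> s j" "s j < 1" for j using s by auto
  define t where "t j = (if j = m then s j / 2 else s j)" for j
  have "(\<Sum>j\<in>UNIV. t j *\<^sub>R real_vec (pp j)) = (\<Sum>j\<in>UNIV. s j *\<^sub>R real_vec (p j))"
    unfolding sum_pp by (rule sum.cong) (auto simp: t_def)
  moreover have "\<forall>j. 0 \<le> t j \<and> t j < 1"
  proof
    fix j show "0 \<le> t j \<and> t j < 1" using s0[of j] by (cases "j = m") (auto simp: t_def)
  qed
  ultimately show "i \<in> Bp pp" using si unfolding Bp_def by (intro CollectI exI[of _ t] conjI) auto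
  define t2 where "t2 j = (if j = m then (s j + 1) / 2 else s j)" for j
  have "(\<Sum>j\<in>UNIV. t2 j *\<^sub>R real_vec (pp j)) = (\<Sum>j\<in>UNIV. (if j = m then s j + 1 else s j) *\<^sub>R real_vec (p j))"
    unfolding sum_pp by (rule sum.cong) (auto simp: t2_def)
  also have "\<dots> = real_vec (p m + i)" unfolding sum_upd_add using si by (simp add: real_vec_add)
  finally have "real_vec (p m + i) = (\<Sum>j\<in>UNIV. t2 j *\<^sub>R real_vec (pp j))" by simp
  moreover have "\<forall>j. 0 \<le> t2 j \<and> t2 j < 1" using s0 by (auto simp: t2_def add_nonneg_nonneg)
  ultimately show "p m + i \<in> Bp pp" unfolding Bp_def by blast
qed

lemma Bp_pp: "Bp pp = Bp p \<union> (\<lambda>w. p m + w) ` Bp p"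
  using Bp_pp_sub Bp_pp_sup by blast

lemma Bp_pp_disj: "lin_indep_family p \<Longrightarrow> Bp p \<inter> (\<lambda>w. p m + w) ` Bp p = {}"
proof (rule ccontr)
  assume li: "lin_indep_family p" and "Bp p \<inter> (\<lambda>w. p m + w) ` Bp p \<noteq> {}"
  then obtain w where w: "w \<in> Bp p" "p m + w \<in> Bp p" by auto
  have "(p m + w) - w \<in> Lat p" using Lat_gen[of p m] by simp
  hence "p m + w = w" using Bp_unique[OF li w(2) w(1)] by blast
  hence "p m = 0" by simp
  thus False using li_nonzero[OF li] by blast
qed

lemma sum_pp_split:
  assumes li: "lin_indep_family p"
  shows "(\<Sum>j\<in>Bp pp. g j) = (\<Sum>j\<in>Bp p. g j) + (\<Sum>j\<in>Bp p. g (p m + j))"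
proof -
  have "(\<Sum>j\<in>Bp pp. g j) = (\<Sum>j\<in>Bp p. g j) + (\<Sum>j\<in>(\<lambda>w. p m + w) ` Bp p. g j)"
    unfolding Bp_pp by (rule sum.union_disjoint) (use finite_Bp Bp_pp_disj[OF li] in auto)
  also have "(\<Sum>j\<in>(\<lambda>w. p m + w) ` Bp p. g j) = (\<Sum>j\<in>Bp p. g (p m + j))"
    by (rule sum.reindex_cong[where l="\<lambda>w. p m + w"]) (auto simp: inj_on_def)
  finally show ?thesis .
qed

lemma double_step:
  assumes LP: "local_potentials S r" and li: "lin_indep_family p"
    and xX: "x \<in> Xpq p q" and mn: "\<forall>z\<in>Xpq p q. Wpq S p x \<le> Wpq S p z"
  shows "lin_indep_family pp \<and> x \<in> Xpq pp qq \<and> (\<forall>z\<in>Xpq pp qq. Wpq S pp x \<le> Wpq S pp z)"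
proof -
  define T where "T = tau (p m) (q m)"
  have TT: "T (T z) = tau (pp m) (qq m) z" for z by (simp add: T_def tau_tau pp_def qq_def)
  have Tcomm: "tau k l (T z) = T (tau k l z)" for k l z
    by (simp add: T_def tau_tau add.commute)
  have W2: "Wpq S pp z = Wpq S p z + Wpq S p z" if zX: "z \<in> Xpq p q" for z
  proof -
    have "tau (p m) (q m) z = z" using zX by (simp add: Xpq_def)
    hence "S (p m + j) z = S j z" for j using S_per[OF LP, of "p m" "q m" z j] by (simp add: add.commute)
    thus ?thesis unfolding Wpq_def WB_def sum_pp_split[OF li] by simp
  qed
  have "tau (p m + p m) (q m + q m) x = tau (p m) (q m) (tau (p m) (q m) x)" by (rule tau_tau[symmetric])
  hence xm: "tau (p m + p m) (q m + q m) x = x" using xX by (simp add: Xpq_def)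
  have xX': "x \<in> Xpq pp qq"
    using xX xm unfolding Xpq_def pp_def qq_def by auto
  have TX: "T z \<in> Xpq pp qq" if "z \<in> Xpq pp qq" for z
    using that unfolding Xpq_def by (simp add: Tcomm)
  have WT: "Wpq S pp (T z) = Wpq S pp z" if zX: "z \<in> Xpq pp qq" for z
  proof -
    have tz: "tau (pp m) (qq m) z = z" using zX unfolding Xpq_def by blast
    have per2: "S (j + (p m + p m)) z = S j z" for j
      using S_per[OF LP tz, of j] by (simp add: pp_def)
    have "Wpq S pp (T z) = (\<Sum>j\<in>Bp pp. S (j + p m) z)"
      unfolding Wpq_def WB_def T_def using S_tau[OF LP] by simp
    also have "\<dots> = (\<Sum>j\<in>Bp p. S (j + p m) z) + (\<Sum>j\<in>Bp p. S (p m + j + p m) z)"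
      by (rule sum_pp_split[OF li])
    also have "(\<Sum>j\<in>Bp p. S (p m + j + p m) z) = (\<Sum>j\<in>Bp p. S j z)"
      using per2 by (simp add: add.commute add.left_commute)
    also have "(\<Sum>j\<in>Bp p. S (j + p m) z) = (\<Sum>j\<in>Bp p. S (p m + j) z)"
      by (simp add: add.commute)
    finally show ?thesis unfolding Wpq_def WB_def sum_pp_split[OF li] by simp
  qed
  have minX: "pmin z (T z) \<in> Xpq p q \<and> pmax z (T z) \<in> Xpq p q" if zX: "z \<in> Xpq pp qq" for z
  proof -
    have TzX: "T z \<in> Xpq pp qq" by (rule TX[OF zX])
    have "tau (p j) (q j) (pmin z (T z)) = pmin z (T z) \<and> tau (p j) (q j) (pmax z (T z)) = pmax z (T z)" for j
    proof (cases "j = m")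
      case True
      have TTz: "T (T z) = z" using zX by (simp add: TT Xpq_def)
      have "T (pmin z (T z)) = pmin (T z) (T (T z))" "T (pmax z (T z)) = pmax (T z) (T (T z))"
        by (simp_all add: T_def tau_pmin tau_pmax)
      moreover have "pmin (T z) z = pmin z (T z)" "pmax (T z) z = pmax z (T z)"
        by (auto simp: pmin_def pmax_def fun_eq_iff min.commute max.commute)
      ultimately show ?thesis using True TTz by (simp add: T_def)
    next
      case False
      have "tau (pp j) (qq j) z = z" "tau (pp j) (qq j) (T z) = T z"
        using zX TzX unfolding Xpq_def by blast+
      moreover have "pp j = p j" "qq j = q j" using False by (simp_all add: pp_def qq_def)
      ultimately have "tau (p j) (q j) z = z" "tau (p j) (q j) (T z) = T z" by simp_all
      thus ?thesis by (simp add: tau_pmin tau_pmax)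
    qed
    thus ?thesis by (simp add: Xpq_def)
  qed
  have "\<forall>z\<in>Xpq pp qq. Wpq S pp x \<le> Wpq S pp z"
  proof
    fix z assume zX: "z \<in> Xpq pp qq"
    have "Wpq S pp (pmin z (T z)) + Wpq S pp (pmax z (T z)) \<le> Wpq S pp z + Wpq S pp (T z)"
      unfolding Wpq_def by (rule WB_submod[OF LP])
    moreover have "Wpq S pp (T z) = Wpq S pp z" by (rule WT[OF zX])
    moreover have "Wpq S p x \<le> Wpq S p (pmin z (T z))" "Wpq S p x \<le> Wpq S p (pmax z (T z))"
      using mn minX[OF zX] by auto
    moreover have "Wpq S pp (pmin z (T z)) = Wpq S p (pmin z (T z)) + Wpq S p (pmin z (T z))"
      "Wpq S pp (pmax z (T z)) = Wpq S p (pmax z (T z)) + Wpq S p (pmax z (T z))"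
      using W2 minX[OF zX] by auto
    moreover have "Wpq S pp x = Wpq S p x + Wpq S p x" by (rule W2[OF xX])
    ultimately show "Wpq S pp x \<le> Wpq S pp z" by linarith
  qed
  thus ?thesis using li_pp[OF li] xX' by blast
qed

end



definition PropM :: "(int ^ 'd::finite \<Rightarrow> 'd config \<Rightarrow> real) \<Rightarrow> 'd config \<Rightarrow> ('d \<Rightarrow> int ^ 'd) \<Rightarrow> ('d \<Rightarrow> int) \<Rightarrow> bool" where
  "PropM S x P Q \<longleftrightarrow> lin_indep_family P \<and> x \<in> Xpq P Q \<and> (\<forall>z\<in>Xpq P Q. Wpq S P x \<le> Wpq S P z)"

lemma iter_dirs:
  assumes LP: "local_potentials S r" and fin: "finite A" and H: "PropM S x p q"
  shows "PropM S x (\<lambda>j. if j \<in> A then p j + p j else p j) (\<lambda>j. if j \<in> A then q j + q j else q j)"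
  using fin
proof (induction A rule: finite_induct)
  case empty
  then show ?case using H by simp
next
  case (insert a A)
  define F where "F = (\<lambda>j. if j \<in> A then p j + p j else p j)"
  define G where "G = (\<lambda>j. if j \<in> A then q j + q j else q j)"
  have "PropM S x (pp F a) (qq G a)"
    using double_step[where S=S and r=r and p=F and q=G and x=x and m=a] LP insert.IH
    unfolding PropM_def F_def G_def by blast
  moreover have "pp F a = (\<lambda>j. if j \<in> insert a A then p j + p j else p j)"
    using insert.hyps(2) by (auto simp: pp_def F_def fun_eq_iff)
  moreover have "qq G a = (\<lambda>j. if j \<in> insert a A then q j + q j else q j)"
    using insert.hyps(2) by (auto simp: qq_def G_def fun_eq_iff)
  ultimately show ?case by simp
qed

lemma iter_n:
  assumes LP: "local_potentials S r" and H: "PropM S x p q"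
  shows "PropM S x (\<lambda>j. (2^n) *s p j) (\<lambda>j. 2^n * q j)"
proof (induction n)
  case 0
  have "(\<lambda>j. (2^0) *s p j) = p" by (simp add: fun_eq_iff vec_eq_iff)
  then show ?case using H by simp
next
  case (Suc n)
  have "PropM S x (\<lambda>j. if j \<in> UNIV then (2^n) *s p j + (2^n) *s p j else (2^n) *s p j)
                    (\<lambda>j. if j \<in> UNIV then 2^n * q j + 2^n * q j else 2^n * q j)"
    by (rule iter_dirs[OF LP _ Suc]) simp
  moreover have "(\<lambda>j. if j \<in> UNIV then (2^n) *s p j + (2^n) *s p j else (2^n) *s p j) = (\<lambda>j. (2^Suc n) *s p j)"
    by (simp add: fun_eq_iff vec_eq_iff)
  moreover have "(\<lambda>j. if j \<in> UNIV then 2^n * q j + 2^n * q j else 2^n * q j) = (\<lambda>j. (2^Suc n) * q j)"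
    by (simp add: fun_eq_iff)
  ultimately show ?case by simp
qed

lemma tau_zero: "tau 0 0 z = z" by (simp add: tau_def)

lemma tau_neg: "tau k l z = z \<Longrightarrow> tau (-k) (-l) z = z"
  by (metis tau_tau tau_zero add.left_inverse)

lemma tau_nat_mult: "tau v l z = z \<Longrightarrow> tau (int n *s v) (int n * l) z = z"
proof (induction n)
  case 0 then show ?case by (simp add: tau_zero)
next
  case (Suc n)
  have "int (Suc n) *s v = v + int n *s v" by (simp add: vec_eq_iff algebra_simps)
  moreover have "int (Suc n) * l = l + int n * l" by (simp add: algebra_simps)
  ultimately show ?case using Suc by (simp add: tau_tau[symmetric])
qed

lemma tau_int_mult: assumes "tau v l z = z" shows "tau (c *s v) (c * l) z = z"
proof (cases "c \<ge> 0")
  case True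
  then obtain n where "c = int n" by (metis nonneg_int_cases)
  thus ?thesis using tau_nat_mult[OF assms] by simp
next
  case False
  then obtain n where c: "c = - int n" by (metis neg_int_cases not_le less_imp_le)
  have "tau (int n *s v) (int n * l) z = z" using tau_nat_mult[OF assms] .
  hence "tau (- (int n *s v)) (- (int n * l)) z = z" by (rule tau_neg)
  moreover have "- (int n *s v) = c *s v" by (simp add: c vec_eq_iff)
  ultimately show ?thesis by (simp add: c)
qed

lemma tau_lat_sum:
  assumes "\<forall>j. tau (P j) (Q j) z = z"
  shows "tau (\<Sum>j\<in>A. n j *s P j) (\<Sum>j\<in>A. n j * Q j) z = z"
proof (induction A rule: infinite_finite_induct)
  case (infinite A) then show ?case by (simp add: tau_zero)
next
  case empty then show ?case by (simp add: tau_zero)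
next
  case (insert a A)
  have "tau (\<Sum>j\<in>insert a A. n j *s P j) (\<Sum>j\<in>insert a A. n j * Q j) z
      = tau (n a *s P a) (n a * Q a) (tau (\<Sum>j\<in>A. n j *s P j) (\<Sum>j\<in>A. n j * Q j) z)"
    using insert.hyps by (simp add: tau_tau)
  also have "\<dots> = z" using insert.IH tau_int_mult[of "P a" "Q a" z "n a"] assms by simp
  finally show ?case .
qed

lemma Lat_per:
  assumes LP: "local_potentials S r" and zX: "z \<in> Xpq P Q" and L: "L \<in> Lat P"
  shows "S (j + L) z = S j z"
proof -
  obtain n where n: "real_vec L = (\<Sum>j\<in>UNIV. real_of_int (n j) *\<^sub>R real_vec (P j))"
    using L unfolding Lat_def by blast
  have "real_vec L = real_vec (\<Sum>j\<in>UNIV. n j *s P j)" using n by (simp add: real_vec_sum real_vec_smult)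
  hence LL: "L = (\<Sum>j\<in>UNIV. n j *s P j)" by (rule real_vec_inj)
  have "tau L (\<Sum>j\<in>UNIV. n j * Q j) z = z" unfolding LL
    by (rule tau_lat_sum) (use zX in \<open>simp add: Xpq_def\<close>)
  thus ?thesis by (rule S_per[OF LP])
qed

lemma norm1_sym: "norm1 (a - b) = norm1 (b - a)"
  unfolding norm1_def by (rule sum.cong) (auto simp: abs_minus_commute)



theorem mainTheorem5:
  fixes S :: "int ^ 'd::finite \<Rightarrow> (int ^ 'd \<Rightarrow> real) \<Rightarrow> real"
    and r :: real
    and p :: "'d \<Rightarrow> int ^ 'd"
    and q :: "'d \<Rightarrow> int"
    and x :: "int ^ 'd \<Rightarrow> real"
  assumes "local_potentials S r"
    and "lin_indep_family p"
    and "x \<in> Xpq p q"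
    and "\<forall>y\<in>Xpq p q. Wpq S p x \<le> Wpq S p y"
  shows "global_minimizer S r x"
  unfolding global_minimizer_def
proof (intro allI impI)
  note LP = assms(1) and li = assms(2)
  fix B :: "(int ^ 'd) set" and y :: "int ^ 'd \<Rightarrow> real"
  assume finB: "finite B" and supp: "\<forall>i. y i \<noteq> 0 \<longrightarrow> i \<in> interiorB B r"
  have loc: "\<And>j u v. (\<forall>k\<in>ballZ j r. u k = v k) \<Longrightarrow> S j u = S j v"
    using LP unfolding local_potentials_def by metis
  have H0: "PropM S x p q" using assms unfolding PropM_def by blast
  have ex: "\<forall>v. \<exists>t. real_vec v = (\<Sum>j\<in>UNIV. t j *\<^sub>R real_vec (p j))"
    using li_span[OF li] by blast
  from choice[OF ex] obtain T where T0: "\<forall>v. real_vec v = (\<Sum>j\<in>UNIV. T v j *\<^sub>R real_vec (p j))"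
    by blast
  have T: "real_vec v = (\<Sum>j\<in>UNIV. T v j *\<^sub>R real_vec (p j))" for v using T0 by blast
  define Mr where "Mr = (\<Sum>i\<in>B. \<Sum>j\<in>UNIV. \<bar>T i j\<bar>)"
  define M :: int where "M = \<lceil>Mr\<rceil>"
  have TM: "\<bar>T i j\<bar> \<le> real_of_int M" if "i \<in> B" for i j
  proof -
    have "\<bar>T i j\<bar> \<le> (\<Sum>j\<in>UNIV. \<bar>T i j\<bar>)" by (rule member_le_sum) auto
    also have "\<dots> \<le> Mr" unfolding Mr_def
      by (rule member_le_sum[where f="\<lambda>i. \<Sum>j\<in>UNIV. \<bar>T i j\<bar>"]) (use that finB in \<open>auto intro: sum_nonneg\<close>)
    also have "\<dots> \<le> real_of_int M" unfolding M_def by linarith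
    finally show ?thesis .
  qed
  define n where "n = nat (2 * M + 1)"
  define N :: int where "N = 2 ^ n"
  have "n < 2 ^ n" by (rule less_exp)
  hence "int n < 2 ^ n" by (metis of_nat_less_iff of_nat_numeral of_nat_power)
  hence NM: "2 * M + 1 < N" unfolding N_def n_def by linarith
  define P where "P = (\<lambda>j. N *s p j)"
  define Q where "Q = (\<lambda>j. N * q j)"
  have HP: "PropM S x P Q" unfolding P_def Q_def N_def by (rule iter_n[OF LP H0])
  hence liP: "lin_indep_family P" and xP: "x \<in> Xpq P Q" and minP: "\<forall>z\<in>Xpq P Q. Wpq S P x \<le> Wpq S P z"
    unfolding PropM_def by auto
  have rvP: "real_vec (P j) = real_of_int N *\<^sub>R real_vec (p j)" for j
    by (simp add: P_def real_vec_smult)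
  define k where "k = (\<Sum>j\<in>UNIV. (- M) *s p j)"
  have rvk: "real_vec k = (\<Sum>j\<in>UNIV. real_of_int (- M) *\<^sub>R real_vec (p j))"
    by (simp add: k_def real_vec_sum real_vec_smult)
  define D where "D = (\<lambda>w. k + w) ` Bp P"
  have BD: "i - k \<in> Bp P" if "i \<in> B" for i
  proof -
    define c where "c j = (T i j + real_of_int M) / real_of_int N" for j
    have Npos: "real_of_int N > 0" by (simp add: N_def)
    have "real_vec (i - k) = (\<Sum>j\<in>UNIV. (T i j + real_of_int M) *\<^sub>R real_vec (p j))"
      unfolding real_vec_diff T[of i] rvk by (simp add: sum_subtractf[symmetric] scaleR_add_left)
    also have "\<dots> = (\<Sum>j\<in>UNIV. c j *\<^sub>R real_vec (P j))"
      unfolding rvP c_def using Npos by (simp add: scaleR_scaleR)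
    finally have e: "real_vec (i - k) = (\<Sum>j\<in>UNIV. c j *\<^sub>R real_vec (P j))" .
    have "0 \<le> c j \<and> c j < 1" for j
    proof -
      have "\<bar>T i j\<bar> \<le> real_of_int M" using TM that by blast
      moreover have "real_of_int (2 * M + 1) < real_of_int N" using NM by (simp only: of_int_less_iff)
      ultimately show ?thesis using Npos unfolding c_def by (auto simp: divide_simps)
    qed
    thus ?thesis using e unfolding Bp_def mem_Collect_eq by (intro exI[where x=c]) simp
  qed
  have BsubD: "B \<subseteq> D"
  proof
    fix i assume "i \<in> B"
    hence "i - k \<in> Bp P" by (rule BD)
    moreover have "i = k + (i - k)" by simp
    ultimately show "i \<in> D" unfolding D_def by (rule rev_image_eqI)
  qed
  define rp where "rp v = (SOME w. w \<in> Bp P \<and> v - w \<in> Lat P)" for v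
  have rp_spec: "rp v \<in> Bp P \<and> v - rp v \<in> Lat P" for v
    unfolding rp_def using rep_exists[OF liP] by (rule someI_ex)
  have rp_eq: "rp v = w" if "w \<in> Bp P" "v - w \<in> Lat P" for v w
  proof -
    have "rp v - w = (v - w) - (v - rp v)" by simp
    hence "rp v - w \<in> Lat P" using Lat_diff that rp_spec by metis
    thus ?thesis using Bp_unique[OF liP] rp_spec that by blast
  qed
  define Y where "Y i = y (k + rp (i - k))" for i
  define z where "z i = x i + Y i" for i
  have Yper: "Y (i + P m) = Y i" for i m
  proof -
    have "(i + P m - k) - rp (i - k) = P m + ((i - k) - rp (i - k))" by (simp add: algebra_simps)
    hence "(i + P m - k) - rp (i - k) \<in> Lat P" using Lat_add Lat_gen rp_spec by metis
    hence "rp (i + P m - k) = rp (i - k)" using rp_eq rp_spec by blast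
    thus ?thesis by (simp add: Y_def)
  qed
  have zX: "z \<in> Xpq P Q"
    unfolding Xpq_def
  proof (intro CollectI allI)
    fix m
    have "tau (P m) (Q m) x = x" using xP unfolding Xpq_def by blast
    hence "x (i + P m) + real_of_int (Q m) = x i" for i by (metis tau_def)
    thus "tau (P m) (Q m) z = z" by (simp add: tau_def z_def fun_eq_iff Yper algebra_simps)
  qed
  have Yy: "Y i = y i" if jD: "j \<in> D" and ij: "i \<in> ballZ j r" for i j
  proof (cases "y i = 0")
    case False
    hence "i \<in> interiorB B r" using supp by blast
    hence "i \<in> B" by (simp add: interiorB_def)
    hence "i - k \<in> Bp P" by (rule BD)
    hence "rp (i - k) = i - k" using rp_eq Lat_zero by (metis diff_self)
    thus ?thesis by (simp add: Y_def)
  next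
    case True
    show ?thesis
    proof (rule ccontr)
      assume "Y i \<noteq> y i"
      define s where "s = k + rp (i - k)"
      have "y s \<noteq> 0" using \<open>Y i \<noteq> y i\<close> True by (simp add: Y_def s_def)
      hence "s \<in> interiorB B r" using supp by blast
      hence ballB: "ballZ s r \<subseteq> B" by (simp add: interiorB_def)
      define L where "L = i - s"
      have LL: "L \<in> Lat P" using rp_spec[of "i - k"] by (simp add: L_def s_def algebra_simps)
      define j' where "j' = j - L"
      have "j' - s = j - i" by (simp add: j'_def L_def)
      hence "norm1 (j' - s) = norm1 (i - j)" using norm1_sym by metis
      hence "j' \<in> ballZ s r" using ij by (simp add: ballZ_def)
      hence "j' \<in> B" using ballB by blast
      hence a1: "j' - k \<in> Bp P" by (rule BD)
      have a2: "j - k \<in> Bp P" using jD unfolding D_def by auto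
      have "(j - k) - (j' - k) = L" by (simp add: j'_def)
      hence "j - k = j' - k" using Bp_unique[OF liP a2 a1] LL by simp
      hence "L = 0" by (simp add: j'_def)
      hence "i = s" by (simp add: L_def)
      thus False using \<open>y s \<noteq> 0\<close> True by simp
    qed
  qed
  have Sz: "S j z = S j (\<lambda>i. x i + y i)" if "j \<in> D" for j
    by (rule loc) (use Yy[OF that] in \<open>simp add: z_def\<close>)
  have Sy0: "S j (\<lambda>i. x i + y i) = S j x" if "j \<notin> B" for j
  proof (rule loc, rule ballI)
    fix i assume ij: "i \<in> ballZ j r"
    show "x i + y i = x i"
    proof (rule ccontr)
      assume "x i + y i \<noteq> x i"
      hence "i \<in> interiorB B r" using supp by auto
      hence "ballZ i r \<subseteq> B" by (simp add: interiorB_def)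
      moreover have "j \<in> ballZ i r" using ij norm1_sym[of i j] by (simp add: ballZ_def)
      ultimately show False using that by blast
    qed
  qed
  define h where "h j = S j z - S j x" for j
  have hper: "h (j + L) = h j" if "L \<in> Lat P" for j L
    unfolding h_def using Lat_per[OF LP zX that] Lat_per[OF LP xP that] by simp
  define \<phi> where "\<phi> j = k + rp (j - k)" for j
  have bij: "bij_betw \<phi> (Bp P) D"
    unfolding bij_betw_def
  proof
    show "inj_on \<phi> (Bp P)"
    proof (rule inj_onI)
      fix a b assume a: "a \<in> Bp P" and b: "b \<in> Bp P" and e: "\<phi> a = \<phi> b"
      hence e': "rp (a - k) = rp (b - k)" by (simp add: \<phi>_def)
      have "a - b = ((a - k) - rp (a - k)) - ((b - k) - rp (b - k))" using e' by simp
      hence "a - b \<in> Lat P" using Lat_diff rp_spec by metis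
      thus "a = b" using Bp_unique[OF liP a b] by blast
    qed
    show "\<phi> ` Bp P = D"
    proof
      show "\<phi> ` Bp P \<subseteq> D" unfolding D_def \<phi>_def using rp_spec by auto
      show "D \<subseteq> \<phi> ` Bp P"
      proof
        fix d assume "d \<in> D"
        then obtain w where w: "w \<in> Bp P" and d: "d = k + w" unfolding D_def by auto
        define j where "j = rp (k + w)"
        have "(j - k) - w = - ((k + w) - rp (k + w))" by (simp add: j_def algebra_simps)
        hence "(j - k) - w \<in> Lat P" using Lat_uminus rp_spec by metis
        hence "rp (j - k) = w" using rp_eq w by blast
        hence "\<phi> j = d" by (simp add: \<phi>_def d)
        moreover have "j \<in> Bp P" using rp_spec by (simp add: j_def)
        ultimately show "d \<in> \<phi> ` Bp P" by blast
      qed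
    qed
  qed
  have hphi: "h (\<phi> j) = h j" for j
  proof -
    have "\<phi> j = j + (- ((j - k) - rp (j - k)))" by (simp add: \<phi>_def algebra_simps)
    moreover have "- ((j - k) - rp (j - k)) \<in> Lat P" using Lat_uminus rp_spec by blast
    ultimately show ?thesis using hper by metis
  qed
  have finD: "finite D" unfolding D_def using finite_Bp by blast
  have "Wpq S P z - Wpq S P x = (\<Sum>j\<in>Bp P. h j)"
    unfolding Wpq_def WB_def h_def by (simp add: sum_subtractf)
  also have "\<dots> = (\<Sum>j\<in>Bp P. h (\<phi> j))" using hphi by simp
  also have "\<dots> = (\<Sum>j\<in>D. h j)" by (rule sum.reindex_bij_betw[OF bij])
  also have "\<dots> = (\<Sum>j\<in>D. S j (\<lambda>i. x i + y i) - S j x)"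
    by (rule sum.cong) (simp_all add: h_def Sz)
  also have "\<dots> = (\<Sum>j\<in>B. S j (\<lambda>i. x i + y i) - S j x)"
    by (rule sum.mono_neutral_right[OF finD BsubD]) (use Sy0 in auto)
  also have "\<dots> = WB S B (\<lambda>i. x i + y i) - WB S B x"
    unfolding WB_def by (simp add: sum_subtractf)
  finally have "Wpq S P z - Wpq S P x = WB S B (\<lambda>i. x i + y i) - WB S B x" .
  moreover have "Wpq S P x \<le> Wpq S P z" using minP zX by blast
  ultimately show "WB S B x \<le> WB S B (\<lambda>i. x i + y i)" by linarith
qed


end
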